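(* Let $m\ge1$, let $\mathcal{X},\mathcal{A}_1,\dots,\mathcal{A}_m$ be finite sets with $|\mathcal{X}|=d\ge2$, and let $P$ be a probability distribution on $\mathcal{X}\times\mathcal{A}_1\times\cdots\times\mathcal{A}_m$. Let $Q$ be an $m$-partite no-signalling correlation with outputs in $\mathcal{X}^m$ and inputs in $\mathcal{A}_1\times\cdots\times\mathcal{A}_m$ such that $Q(x,\dots,x|a_1,\dots,a_m)\le 1/d$ for all $x\in\mathcal{X}$ and all $a_i\in\mathcal{A}_i$. Then $$\sum_{x,a_1,\dots,a_m}P(x,a_1,\dots,a_m)Q(x,\dots,x|a_1,\dots,a_m)\le\omega_{\mathrm{c}},$$ where $\omega_{\mathrm{c}}=\max_{f_1,\dots,f_m}\sum_{x,a_1,\dots,a_m}P(x,a_1,\dots,a_m)\,\delta[f_1(a_1)=\cdots=f_m(a_m)=x]$ over functions $f_i\colon\mathcal{A}_i\to\mathcal{X}$.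
   Context: $\delta$ is the indicator function. An $m$-partite no-signalling correlation is a conditional distribution $Q(x_1,\dots,x_m|a_1,\dots,a_m)$ on $\mathcal{X}^m$ given $(a_1,\dots,a_m)$ such that for every index set $I\subset\{1,\dots,m\}$ with complement $J$, $\sum_{x_J}Q(x_I,x_J|a_I,a_J)$ does not depend on $a_J$ (for all fixed $x_I,a_I$). *)

theory Defs
  imports Complex_Main "HOL-Library.FuncSet"
begin

text \<open>Inputs: a tuple (a_1,...,a_m) is a function in PiE {..<m} A, where A i is the
 input set of party i. Outputs: a tuple (x_1,...,x_m) is a function in PiE {..<m} (\<lambda>_. X).\<close>

definition cond_distr :: "nat \<Rightarrow> 'x set \<Rightarrow> (nat \<Rightarrow> 'a set) \<Rightarrow> ((nat \<Rightarrow> 'x) \<Rightarrow> (nat \<Rightarrow> 'a) \<Rightarrow> real) \<Rightarrow> bool" where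
  "cond_distr m X A Q \<longleftrightarrow>
     (\<forall>a\<in>PiE {..<m} A. (\<forall>x\<in>PiE {..<m} (\<lambda>_. X). Q x a \<ge> 0) \<and>
        (\<Sum>x\<in>PiE {..<m} (\<lambda>_. X). Q x a) = 1)"

definition no_signalling :: "nat \<Rightarrow> 'x set \<Rightarrow> (nat \<Rightarrow> 'a set) \<Rightarrow> ((nat \<Rightarrow> 'x) \<Rightarrow> (nat \<Rightarrow> 'a) \<Rightarrow> real) \<Rightarrow> bool" where
  "no_signalling m X A Q \<longleftrightarrow> cond_distr m X A Q \<and>
     (\<forall>I \<subseteq> {..<m}. \<forall>xI \<in> PiE I (\<lambda>_. X). \<forall>a\<in>PiE {..<m} A. \<forall>a'\<in>PiE {..<m} A.
        (\<forall>i\<in>I. a i = a' i) \<longrightarrow>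
        (\<Sum>xJ\<in>PiE ({..<m} - I) (\<lambda>_. X). Q (\<lambda>i. if i \<in> I then xI i else xJ i) a) =
        (\<Sum>xJ\<in>PiE ({..<m} - I) (\<lambda>_. X). Q (\<lambda>i. if i \<in> I then xI i else xJ i) a'))"

definition prob_distr :: "nat \<Rightarrow> 'x set \<Rightarrow> (nat \<Rightarrow> 'a set) \<Rightarrow> ('x \<Rightarrow> (nat \<Rightarrow> 'a) \<Rightarrow> real) \<Rightarrow> bool" where
  "prob_distr m X A P \<longleftrightarrow>
     (\<forall>x\<in>X. \<forall>a\<in>PiE {..<m} A. P x a \<ge> 0) \<and>
     (\<Sum>x\<in>X. \<Sum>a\<in>PiE {..<m} A. P x a) = 1"

definition omega_c :: "nat \<Rightarrow> 'x set \<Rightarrow> (nat \<Rightarrow> 'a set) \<Rightarrow> ('x \<Rightarrow> (nat \<Rightarrow> 'a) \<Rightarrow> real) \<Rightarrow> real" where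
  "omega_c m X A P = Max ((\<lambda>f. \<Sum>x\<in>X. \<Sum>a\<in>PiE {..<m} A.
        P x a * (if \<forall>i<m. f i (a i) = x then 1 else 0))
      ` PiE {..<m} (\<lambda>i. A i \<rightarrow>\<^sub>E X))"

end

theory Submission
  imports Defs
begin

theorem mainTheorem9:
  fixes m :: nat and X :: "'x set" and A :: "nat \<Rightarrow> 'a set"
    and P :: "'x \<Rightarrow> (nat \<Rightarrow> 'a) \<Rightarrow> real"
    and Q :: "(nat \<Rightarrow> 'x) \<Rightarrow> (nat \<Rightarrow> 'a) \<Rightarrow> real"
  assumes "m \<ge> 1"
    and "finite X" and "card X \<ge> 2"
    and "\<forall>i<m. finite (A i)"
    and "prob_distr m X A P"
    and "no_signalling m X A Q"
    and "\<forall>x\<in>X. \<forall>a\<in>PiE {..<m} A. Q (restrict (\<lambda>_. x) {..<m}) a \<le> 1 / real (card X)"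
  shows "(\<Sum>x\<in>X. \<Sum>a\<in>PiE {..<m} A. P x a * Q (restrict (\<lambda>_. x) {..<m}) a)
           \<le> omega_c m X A P"
proof -
  define d where "d = real (card X)"
  have dpos: "d > 0" using assms(3) unfolding d_def by simp
  have Pnn: "\<And>x a. x \<in> X \<Longrightarrow> a \<in> PiE {..<m} A \<Longrightarrow> P x a \<ge> 0"
    using assms(5) unfolding prob_distr_def by blast
  have Psum: "(\<Sum>x\<in>X. \<Sum>a\<in>PiE {..<m} A. P x a) = 1"
    using assms(5) unfolding prob_distr_def by blast
  have "(\<Sum>x\<in>X. \<Sum>a\<in>PiE {..<m} A. P x a * Q (restrict (\<lambda>_. x) {..<m}) a)
      \<le> (\<Sum>x\<in>X. \<Sum>a\<in>PiE {..<m} A. P x a * (1 / d))"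
    apply (rule sum_mono)+
    apply (rule mult_left_mono)
    using assms(7) Pnn unfolding d_def by auto
  also have "\<dots> = 1 / d"
    using Psum by (simp add: sum_divide_distrib[symmetric])
  finally have L: "(\<Sum>x\<in>X. \<Sum>a\<in>PiE {..<m} A. P x a * Q (restrict (\<lambda>_. x) {..<m}) a) \<le> 1 / d" .
  define S where "S x = (\<Sum>a\<in>PiE {..<m} A. P x a)" for x
  obtain x0 where x0: "x0 \<in> X" "S x0 \<ge> 1 / d"
  proof (rule ccontr)
    assume "\<not> thesis"
    with that have "\<forall>x\<in>X. S x < 1 / d" by force
    hence "(\<Sum>x\<in>X. S x) < (\<Sum>x\<in>X. 1 / d)"
      using assms(2,3) by (intro sum_strict_mono) auto
    also have "\<dots> = 1" using dpos unfolding d_def by simp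
    finally show False using Psum unfolding S_def by simp
  qed
  define f where "f = restrict (\<lambda>i. restrict (\<lambda>_. x0) (A i)) {..<m}"
  have fin: "finite (PiE {..<m} (\<lambda>i. A i \<rightarrow>\<^sub>E X))"
    using assms(2,4) by (intro finite_PiE) (auto intro: finite_PiE)
  have fmem: "f \<in> PiE {..<m} (\<lambda>i. A i \<rightarrow>\<^sub>E X)"
    unfolding f_def using x0(1) by auto
  have "(\<Sum>x\<in>X. \<Sum>a\<in>PiE {..<m} A. P x a * (if \<forall>i<m. f i (a i) = x then 1 else 0)) = S x0"
  proof -
    have "(\<Sum>x\<in>X. \<Sum>a\<in>PiE {..<m} A. P x a * (if \<forall>i<m. f i (a i) = x then 1 else 0))
        = (\<Sum>x\<in>X. if x = x0 then S x else 0)"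
    proof (rule sum.cong[OF refl])
      fix x assume "x \<in> X"
      have "\<And>a. a \<in> PiE {..<m} A \<Longrightarrow> (\<forall>i<m. f i (a i) = x) = (x = x0)"
        unfolding f_def using assms(1) by (auto simp: PiE_iff) (metis Suc_le_lessD)
      thus "(\<Sum>a\<in>PiE {..<m} A. P x a * (if \<forall>i<m. f i (a i) = x then 1 else 0)) = (if x = x0 then S x else 0)"
        unfolding S_def by (auto intro!: sum.cong)
    qed
    also have "\<dots> = S x0" using x0(1) assms(2) by (simp add: sum.delta)
    finally show ?thesis .
  qed
  hence "S x0 \<le> omega_c m X A P"
    unfolding omega_c_def using fin fmem
    by (metis (no_types, lifting) Max_ge finite_imageI image_eqI)
  with L x0(2) show ?thesis by linarith
qed

end
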